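(* Let $G=(V,E)$ be a graph on $n$ vertices and $\epsilon>0$. Consider the algorithm that sets $V_1=V$, $E_1=E$ and for $i=1,\dots,n$: lets $w_i=(4/\epsilon)\sqrt{n/(n-i+1)}$, picks a vertex $v\in V_i$ with probability proportional to $d_{E_i}(v)+w_i$, outputs $v$, and sets $V_{i+1}=V_i\setminus\{v\}$ and $E_{i+1}=E_i$ minus all edges incident to $v$. From the resulting permutation of $V$, form the vertex cover consisting of, for each edge of $E$, its endpoint appearing earlier in the permutation, and let $\mathrm{ALG}(G)$ denote the size of this vertex cover. Then $$\mathbb{E}[\mathrm{ALG}(G)]\le\Big(2+2\cdot\tfrac1n\textstyle\sum_{i=1}^n w_i\Big)|\mathrm{OPT}(G)|\le(2+16/\epsilon)|\mathrm{OPT}(G)|.$$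
   Context: $d_{E_i}(v)$ is the number of edges of $E_i$ incident to $v$; $|\mathrm{OPT}(G)|$ is the size of a minimum vertex cover of $G$. *)

theory Defs
  imports "HOL-Probability.Probability"
begin

definition simple_graph :: "'a set \<Rightarrow> 'a set set \<Rightarrow> bool" where
  "simple_graph V E \<longleftrightarrow> finite V \<and> (\<forall>e\<in>E. e \<subseteq> V \<and> card e = 2)"

definition deg :: "'a set set \<Rightarrow> 'a \<Rightarrow> nat" where
  "deg Ec v = card {e\<in>Ec. v \<in> e}"

definition is_vertex_cover :: "'a set \<Rightarrow> 'a set set \<Rightarrow> 'a set \<Rightarrow> bool" where
  "is_vertex_cover V E C \<longleftrightarrow> C \<subseteq> V \<and> (\<forall>e\<in>E. e \<inter> C \<noteq> {})"

definition OPT :: "'a set \<Rightarrow> 'a set set \<Rightarrow> nat" where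
  "OPT V E = Min {card C | C. is_vertex_cover V E C}"

text \<open>Weight w_i at step i = n - card Vc + 1, so n - i + 1 = card Vc.\<close>
definition wt :: "real \<Rightarrow> nat \<Rightarrow> nat \<Rightarrow> real" where
  "wt eps n i = (4 / eps) * sqrt (real n / real (n - i + 1))"

definition pick :: "real \<Rightarrow> 'a set \<Rightarrow> 'a set set \<Rightarrow> 'a pmf" where
  "pick w Vc Ec = embed_pmf (\<lambda>v. if v \<in> Vc
       then (real (deg Ec v) + w) / (\<Sum>u\<in>Vc. real (deg Ec u) + w) else 0)"

text \<open>The random process, run for k steps starting from current vertex set Vc and
  edge set Ec; n is the number of vertices of the original graph.  Step index
  i = n - card Vc + 1.\<close>
fun perm_pmf :: "real \<Rightarrow> nat \<Rightarrow> nat \<Rightarrow> 'a set \<Rightarrow> 'a set set \<Rightarrow> 'a list pmf" where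
  "perm_pmf eps n 0 Vc Ec = return_pmf []"
| "perm_pmf eps n (Suc k) Vc Ec =
     bind_pmf (pick (wt eps n (n - card Vc + 1)) Vc Ec) (\<lambda>v.
       map_pmf (\<lambda>vs. v # vs) (perm_pmf eps n k (Vc - {v}) {e\<in>Ec. v \<notin> e}))"

definition alg_perm :: "real \<Rightarrow> 'a set \<Rightarrow> 'a set set \<Rightarrow> 'a list pmf" where
  "alg_perm eps V E = perm_pmf eps (card V) (card V) V E"

definition pos :: "'a list \<Rightarrow> 'a \<Rightarrow> nat" where
  "pos \<sigma> x = (LEAST i. i < length \<sigma> \<and> \<sigma> ! i = x)"

definition cover_of_perm :: "'a set set \<Rightarrow> 'a list \<Rightarrow> 'a set" where
  "cover_of_perm E \<sigma> = {x. \<exists>e\<in>E. x \<in> e \<and> (\<forall>y\<in>e. pos \<sigma> x \<le> pos \<sigma> y)}"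

definition ALG_expect :: "real \<Rightarrow> 'a set \<Rightarrow> 'a set set \<Rightarrow> real" where
  "ALG_expect eps V E =
     measure_pmf.expectation (alg_perm eps V E) (\<lambda>\<sigma>. real (card (cover_of_perm E \<sigma>)))"

end

theory Submission imports Defs begin

lemma pick_pmf:
  assumes fin: "finite Vc" and ne: "Vc \<noteq> {}" and w: "w > 0"
  shows "pmf (pick w Vc Ec) v = (if v \<in> Vc then (real (deg Ec v) + w) / (\<Sum>u\<in>Vc. real (deg Ec u) + w) else 0)"
    and "set_pmf (pick w Vc Ec) \<subseteq> Vc"
proof -
  define D where "D = (\<Sum>u\<in>Vc. real (deg Ec u) + w)"
  have Dpos: "D > 0" unfolding D_def using fin ne w
    by (intro sum_pos) (auto intro: add_nonneg_pos)
  define f where "f = (\<lambda>v. if v \<in> Vc then (real (deg Ec v) + w) / D else 0)"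
  have nn: "\<And>x. 0 \<le> f x" unfolding f_def using Dpos w by auto
  have "(\<integral>\<^sup>+x. ennreal (f x) \<partial>count_space UNIV) = (\<Sum>x\<in>Vc. ennreal (f x))"
    by (rule nn_integral_count_space') (auto simp: fin f_def)
  also have "\<dots> = ennreal (\<Sum>x\<in>Vc. f x)" using nn by (simp add: sum_ennreal)
  also have "(\<Sum>x\<in>Vc. f x) = (\<Sum>x\<in>Vc. (real (deg Ec x) + w)) / D"
    unfolding f_def by (simp add: sum_divide_distrib)
  also have "\<dots> = 1" using Dpos D_def by simp
  finally have prob: "(\<integral>\<^sup>+x. ennreal (f x) \<partial>count_space UNIV) = 1" by simp
  have eq: "pick w Vc Ec = embed_pmf f" unfolding pick_def f_def D_def by simp
  show "pmf (pick w Vc Ec) v = (if v \<in> Vc then (real (deg Ec v) + w) / (\<Sum>u\<in>Vc. real (deg Ec u) + w) else 0)"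
    unfolding eq using pmf_embed_pmf[OF nn prob] by (simp add: f_def D_def)
  show "set_pmf (pick w Vc Ec) \<subseteq> Vc"
    unfolding eq using set_embed_pmf[OF nn prob] by (auto simp: f_def)
qed

lemma wt_eq:
  assumes "1 \<le> N" "N \<le> n"
  shows "wt eps n (n - N + 1) = 4 / eps * sqrt (real n / real N)"
proof -
  have "n - (n - N + 1) + 1 = N" using assms by simp
  thus ?thesis by (simp add: wt_def)
qed

lemma wt_pos:
  assumes "eps > 0" "1 \<le> N" "N \<le> n"
  shows "wt eps n (n - N + 1) > 0"
  using wt_eq[OF assms(2,3), of eps] assms by simp

lemma perm_support:
  assumes "finite Vc" "card Vc \<le> n" "eps > 0"
  shows "\<sigma> \<in> set_pmf (perm_pmf eps n (card Vc) Vc Ec) \<Longrightarrow> distinct \<sigma> \<and> set \<sigma> = Vc \<and> length \<sigma> = card Vc"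
  using assms
proof (induction "card Vc" arbitrary: Vc Ec \<sigma>)
  case 0
  have "Vc = {}" using 0 by simp
  moreover have "\<sigma> = []" using 0 by (simp add: 0(1)[symmetric])
  ultimately show ?case by simp
next
  case (Suc k)
  from Suc.hyps(2) have ne: "Vc \<noteq> {}" by auto
  have w: "wt eps n (n - card Vc + 1) > 0" using wt_pos[of eps "card Vc" n] Suc by simp
  from Suc.prems(1) obtain v \<sigma>' where v: "v \<in> set_pmf (pick (wt eps n (n - card Vc + 1)) Vc Ec)"
    and s': "\<sigma>' \<in> set_pmf (perm_pmf eps n k (Vc - {v}) {e\<in>Ec. v \<notin> e})" and \<sigma>: "\<sigma> = v # \<sigma>'"
    by (auto simp: Suc.hyps(2)[symmetric])
  have vV: "v \<in> Vc" using v pick_pmf(2)[OF Suc.prems(2) ne w] by auto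
  have ck: "k = card (Vc - {v})" using vV Suc.hyps(2) Suc.prems(2) by simp
  have cle: "card (Vc - {v}) \<le> n" using ck Suc.hyps(2) Suc.prems(3) by simp
  have s'': "\<sigma>' \<in> set_pmf (perm_pmf eps n (card (Vc - {v})) (Vc - {v}) {e\<in>Ec. v \<notin> e})"
    using s' ck by simp
  have fin': "finite (Vc - {v})" using Suc.prems(2) by simp
  have IH: "distinct \<sigma>' \<and> set \<sigma>' = Vc - {v} \<and> length \<sigma>' = card (Vc - {v})"
    by (rule Suc.hyps(1)[OF ck s'' fin' cle Suc.prems(4)])
  thus ?case using \<sigma> vV Suc.hyps(2) by auto
qed

lemma finite_support:
  assumes "finite Vc" "card Vc \<le> n" "eps > 0"
  shows "finite (set_pmf (perm_pmf eps n (card Vc) Vc Ec))"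
proof (rule finite_subset)
  show "set_pmf (perm_pmf eps n (card Vc) Vc Ec) \<subseteq> {xs. set xs \<subseteq> Vc \<and> length xs = card Vc}"
    using perm_support[OF assms] by auto
  show "finite {xs. set xs \<subseteq> Vc \<and> length xs = card Vc}"
    using finite_lists_length_eq[OF assms(1)] by simp
qed

lemma pos_Cons_hd: "pos (v # \<sigma>) v = 0"
  unfolding pos_def by (rule Least_eq_0) simp

lemma pos_Cons_tl:
  assumes "x \<in> set \<sigma>" "x \<noteq> v"
  shows "pos (v # \<sigma>) x = Suc (pos \<sigma> x)"
proof -
  obtain i where i: "i < length \<sigma>" "\<sigma> ! i = x" using assms(1) by (auto simp: in_set_conv_nth)
  have "(LEAST i. i < length (v#\<sigma>) \<and> (v#\<sigma>) ! i = x) = Suc (LEAST m. Suc m < length (v#\<sigma>) \<and> (v#\<sigma>) ! Suc m = x)"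
    by (rule Least_Suc[of _ "Suc i"]) (use i assms in auto)
  thus ?thesis unfolding pos_def by simp
qed

lemma cover_Cons:
  assumes "v \<notin> set \<sigma>" and sub: "\<forall>e\<in>Ec. e \<subseteq> set (v # \<sigma>)"
  shows "cover_of_perm Ec (v # \<sigma>) = (if \<exists>e\<in>Ec. v \<in> e then {v} else {}) \<union> cover_of_perm {e\<in>Ec. v \<notin> e} \<sigma>"
proof -
  have A: "x \<in> cover_of_perm Ec (v # \<sigma>) \<longleftrightarrow> x \<in> cover_of_perm {e\<in>Ec. v \<notin> e} \<sigma>" if "x \<noteq> v" for x
  proof
    assume "x \<in> cover_of_perm Ec (v # \<sigma>)"
    then obtain e where e: "e \<in> Ec" "x \<in> e" "\<forall>y\<in>e. pos (v#\<sigma>) x \<le> pos (v#\<sigma>) y"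
      unfolding cover_of_perm_def by auto
    have xs: "x \<in> set \<sigma>" using e sub that by auto
    have "v \<notin> e"
    proof
      assume "v \<in> e"
      hence "pos (v#\<sigma>) x \<le> pos (v#\<sigma>) v" using e(3) by blast
      hence "pos (v#\<sigma>) x \<le> 0" by (simp only: pos_Cons_hd)
      thus False using pos_Cons_tl[OF xs that] by simp
    qed
    moreover have "\<forall>y\<in>e. pos \<sigma> x \<le> pos \<sigma> y"
    proof
      fix y assume y: "y \<in> e"
      have "y \<noteq> v" using y \<open>v \<notin> e\<close> by auto
      hence ys: "y \<in> set \<sigma>" using y e sub by auto
      have "pos (v#\<sigma>) x \<le> pos (v#\<sigma>) y" using e(3) y by blast
      thus "pos \<sigma> x \<le> pos \<sigma> y" by (simp only: pos_Cons_tl[OF xs that] pos_Cons_tl[OF ys \<open>y \<noteq> v\<close>])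
    qed
    ultimately show "x \<in> cover_of_perm {e\<in>Ec. v \<notin> e} \<sigma>" using e unfolding cover_of_perm_def by auto
  next
    assume "x \<in> cover_of_perm {e\<in>Ec. v \<notin> e} \<sigma>"
    then obtain e where e: "e \<in> Ec" "v \<notin> e" "x \<in> e" "\<forall>y\<in>e. pos \<sigma> x \<le> pos \<sigma> y"
      unfolding cover_of_perm_def by auto
    have inS: "\<And>y. y \<in> e \<Longrightarrow> y \<in> set \<sigma> \<and> y \<noteq> v" using e sub by auto
    have "\<forall>y\<in>e. pos (v#\<sigma>) x \<le> pos (v#\<sigma>) y"
    proof
      fix y assume y: "y \<in> e"
      have xx: "x \<in> set \<sigma>" "x \<noteq> v" using inS e(3) by auto
      have yy: "y \<in> set \<sigma>" "y \<noteq> v" using inS y by auto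
      show "pos (v#\<sigma>) x \<le> pos (v#\<sigma>) y" using e(4) y
        by (simp only: pos_Cons_tl[OF xx] pos_Cons_tl[OF yy]) simp
    qed
    thus "x \<in> cover_of_perm Ec (v # \<sigma>)" using e unfolding cover_of_perm_def by auto
  qed
  have B: "v \<in> cover_of_perm Ec (v # \<sigma>) \<longleftrightarrow> (\<exists>e\<in>Ec. v \<in> e)"
    unfolding cover_of_perm_def using pos_Cons_hd[of v \<sigma>] by auto
  have C: "v \<notin> cover_of_perm {e\<in>Ec. v \<notin> e} \<sigma>" unfolding cover_of_perm_def by auto
  show ?thesis
  proof (rule set_eqI)
    fix x
    show "x \<in> cover_of_perm Ec (v # \<sigma>) \<longleftrightarrow> x \<in> (if \<exists>e\<in>Ec. v \<in> e then {v} else {}) \<union> cover_of_perm {e\<in>Ec. v \<notin> e} \<sigma>"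
    proof (cases "x = v")
      case True thus ?thesis using B C by auto
    next
      case False thus ?thesis using A[OF False] by auto
    qed
  qed
qed


definition ginv :: "'a set \<Rightarrow> 'a set set \<Rightarrow> bool" where
  "ginv Vc Ec \<longleftrightarrow> finite Vc \<and> (\<forall>e\<in>Ec. e \<subseteq> Vc \<and> card e = 2)"

definition Fexp :: "real \<Rightarrow> nat \<Rightarrow> 'a set \<Rightarrow> 'a set set \<Rightarrow> real" where
  "Fexp eps n Vc Ec = measure_pmf.expectation (perm_pmf eps n (card Vc) Vc Ec)
      (\<lambda>\<sigma>. real (card (cover_of_perm Ec \<sigma>)))"

lemma ginv_finite_E: "ginv Vc Ec \<Longrightarrow> finite Ec"
  unfolding ginv_def by (meson PowI finite_Pow_iff finite_subset subsetI)

lemma ginv_step: "ginv Vc Ec \<Longrightarrow> ginv (Vc - {v}) {e\<in>Ec. v \<notin> e}"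
  unfolding ginv_def by auto

lemma deg_pos_iff: "finite Ec \<Longrightarrow> deg Ec v > 0 \<longleftrightarrow> (\<exists>e\<in>Ec. v \<in> e)"
  unfolding deg_def by (auto simp: card_gt_0_iff)

lemma card_cover_Cons:
  assumes "distinct (v # \<sigma>)" "\<forall>e\<in>Ec. e \<subseteq> set (v # \<sigma>)" "finite Ec"
  shows "real (card (cover_of_perm Ec (v # \<sigma>))) =
     (if deg Ec v > 0 then 1 else 0) + real (card (cover_of_perm {e\<in>Ec. v \<notin> e} \<sigma>))"
proof -
  have sub: "cover_of_perm {e\<in>Ec. v \<notin> e} \<sigma> \<subseteq> set \<sigma>"
    using assms(2) unfolding cover_of_perm_def by auto
  hence fin: "finite (cover_of_perm {e\<in>Ec. v \<notin> e} \<sigma>)" by (rule finite_subset) simp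
  have vn: "v \<notin> cover_of_perm {e\<in>Ec. v \<notin> e} \<sigma>" using sub assms(1) by auto
  show ?thesis
    using cover_Cons[of v \<sigma> Ec] assms fin vn deg_pos_iff[OF assms(3), of v] by auto
qed

lemma Fexp_step:
  assumes g: "ginv Vc Ec" and ne: "Vc \<noteq> {}" and le: "card Vc \<le> n" and eps: "eps > 0"
  shows "Fexp eps n Vc Ec = (\<Sum>v\<in>Vc. pmf (pick (wt eps n (n - card Vc + 1)) Vc Ec) v *
            ((if deg Ec v > 0 then 1 else 0) + Fexp eps n (Vc - {v}) {e\<in>Ec. v \<notin> e}))"
proof -
  define w where "w = wt eps n (n - card Vc + 1)"
  have fin: "finite Vc" using g ginv_def by auto
  have finE: "finite Ec" using ginv_finite_E[OF g] .
  obtain k where k: "card Vc = Suc k" using ne fin by (metis card_0_eq not0_implies_Suc)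
  have w0: "w > 0" unfolding w_def using wt_pos[OF eps, of "card Vc" n] k le by simp
  define f where "f = (\<lambda>\<sigma>. real (card (cover_of_perm Ec \<sigma>)))"
  define M where "M = (\<lambda>v. perm_pmf eps n k (Vc - {v}) {e\<in>Ec. v \<notin> e})"
  have cardv: "\<And>v. v \<in> Vc \<Longrightarrow> card (Vc - {v}) = k" using k fin by simp
  have Mv: "\<And>v. v \<in> Vc \<Longrightarrow> M v = perm_pmf eps n (card (Vc - {v})) (Vc - {v}) {e\<in>Ec. v \<notin> e}"
    unfolding M_def using cardv by simp
  have finM: "\<And>v. v \<in> Vc \<Longrightarrow> finite (set_pmf (M v))"
    using Mv finite_support[of "Vc - {_}" n eps] fin le eps
    by (metis card_Diff1_le finite_Diff le_trans)
  have "Fexp eps n Vc Ec = measure_pmf.expectation (bind_pmf (pick w Vc Ec) (\<lambda>v. map_pmf ((#) v) (M v))) f"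
    unfolding Fexp_def f_def M_def w_def by (simp add: k)
  also have "\<dots> = (\<Sum>v\<in>Vc. pmf (pick w Vc Ec) v *\<^sub>R measure_pmf.expectation (map_pmf ((#) v) (M v)) f)"
    by (rule pmf_expectation_bind) (use fin finM pick_pmf(2)[OF fin ne w0] in auto)
  also have "\<dots> = (\<Sum>v\<in>Vc. pmf (pick w Vc Ec) v *
            ((if deg Ec v > 0 then 1 else 0) + Fexp eps n (Vc - {v}) {e\<in>Ec. v \<notin> e}))"
  proof (rule sum.cong[OF refl])
    fix v assume v: "v \<in> Vc"
    have "measure_pmf.expectation (map_pmf ((#) v) (M v)) f = measure_pmf.expectation (M v) (\<lambda>\<sigma>. f (v # \<sigma>))"
      by simp
    also have "\<dots> = measure_pmf.expectation (M v) (\<lambda>\<sigma>. (if deg Ec v > 0 then 1 else 0) + real (card (cover_of_perm {e\<in>Ec. v \<notin> e} \<sigma>)))"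
    proof (rule integral_cong_AE)
      show "AE \<sigma> in M v. f (v # \<sigma>) = (if deg Ec v > 0 then 1 else 0) + real (card (cover_of_perm {e\<in>Ec. v \<notin> e} \<sigma>))"
      proof (subst AE_measure_pmf_iff, intro ballI)
        fix \<sigma> assume s: "\<sigma> \<in> set_pmf (M v)"
        have "distinct \<sigma> \<and> set \<sigma> = Vc - {v} \<and> length \<sigma> = card (Vc - {v})"
        proof (rule perm_support)
          show "finite (Vc - {v})" using fin by simp
          show "card (Vc - {v}) \<le> n" using le fin by (meson card_Diff1_le le_trans)
          show "eps > 0" by (rule eps)
          show "\<sigma> \<in> set_pmf (perm_pmf eps n (card (Vc - {v})) (Vc - {v}) {e\<in>Ec. v \<notin> e})"
            using s Mv[OF v] by simp
        qed
        hence d: "distinct (v # \<sigma>)" and st: "set (v # \<sigma>) = Vc" using v by auto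
        have "\<forall>e\<in>Ec. e \<subseteq> set (v # \<sigma>)" using g st unfolding ginv_def by auto
        thus "f (v # \<sigma>) = (if deg Ec v > 0 then 1 else 0) + real (card (cover_of_perm {e\<in>Ec. v \<notin> e} \<sigma>))"
          unfolding f_def using card_cover_Cons[OF d _ finE] by simp
      qed
    qed simp_all
    also have "\<dots> = (if deg Ec v > 0 then 1 else 0) + Fexp eps n (Vc - {v}) {e\<in>Ec. v \<notin> e}"
      unfolding Fexp_def Mv[OF v]
      by (subst Bochner_Integration.integral_add) (auto intro!: integrable_measure_pmf_finite finM[OF v, unfolded Mv[OF v]])
    finally show "pmf (pick w Vc Ec) v *\<^sub>R measure_pmf.expectation (map_pmf ((#) v) (M v)) f =
        pmf (pick w Vc Ec) v * ((if deg Ec v > 0 then 1 else 0) + Fexp eps n (Vc - {v}) {e\<in>Ec. v \<notin> e})"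
      by simp
  qed
  finally show ?thesis unfolding w_def .
qed


lemma Fexp_le_card:
  assumes g: "ginv Vc Ec" and le: "card Vc \<le> n" and eps: "eps > 0"
  shows "Fexp eps n Vc Ec \<le> real (card Vc)"
  unfolding Fexp_def
proof (rule measure_pmf.integral_le_const)
  have fin: "finite Vc" using g ginv_def by auto
  show "integrable (measure_pmf (perm_pmf eps n (card Vc) Vc Ec)) (\<lambda>\<sigma>. real (card (cover_of_perm Ec \<sigma>)))"
    by (rule integrable_measure_pmf_finite[OF finite_support[OF fin le eps]])
  show "AE \<sigma> in measure_pmf (perm_pmf eps n (card Vc) Vc Ec). real (card (cover_of_perm Ec \<sigma>)) \<le> real (card Vc)"
  proof (subst AE_measure_pmf_iff, intro ballI)
    fix \<sigma> assume "\<sigma> \<in> set_pmf (perm_pmf eps n (card Vc) Vc Ec)"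
    have "cover_of_perm Ec \<sigma> \<subseteq> Vc" using g unfolding cover_of_perm_def ginv_def by auto
    thus "real (card (cover_of_perm Ec \<sigma>)) \<le> real (card Vc)" using fin by (simp add: card_mono)
  qed
qed

lemma double_count:
  assumes "finite Ec" "finite X"
  shows "(\<Sum>v\<in>X. deg Ec v) = (\<Sum>e\<in>Ec. card (X \<inter> e))"
proof -
  have "(\<Sum>v\<in>X. deg Ec v) = (\<Sum>v\<in>X. \<Sum>e\<in>Ec. if v \<in> e then 1 else 0)"
    unfolding deg_def using assms by (simp add: sum.If_cases Int_def)
  also have "\<dots> = (\<Sum>e\<in>Ec. \<Sum>v\<in>X. if v \<in> e then 1 else 0)" by (rule sum.swap)
  also have "\<dots> = (\<Sum>e\<in>Ec. card (X \<inter> e))"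
    using assms by (simp add: sum.If_cases Int_def)
  finally show ?thesis .
qed

lemma key_ineq:
  fixes N k S s t P w H hN :: real
  assumes hN: "N*hN = (N-1)*H + 2 + w" and H: "H \<ge> 2 + w"
    and S: "S = s + t" and t0: "0 \<le> t" and ts: "t \<le> s" and P0: "0 \<le> P" and P: "P \<le> k + t"
    and kN: "2*k \<le> N" and k0: "0 \<le> k" and w: "0 < w" and N: "N > 0"
  shows "(S + P*w) + H*(k*(S + N*w) - (s + k*w)) \<le> k*hN*(S + N*w)"
proof -
  define D where "D = S + N*w"
  have D0: "D \<ge> 0" using D_def S t0 ts N w by simp
  have a: "k*S \<le> N* s"
  proof -
    have "k*S \<le> k*(2* s)" using S ts k0 by (intro mult_left_mono) auto
    also have "\<dots> = (2*k)* s" by simp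
    also have "\<dots> \<le> N* s" using kN ts t0 by (intro mult_right_mono) auto
    finally show ?thesis .
  qed
  have b: "k*D*(H-2-w) \<le> N* s*(H-2-w) + k*N*w*(H-2-w)"
  proof -
    have "k*D*(H-2-w) = k*S*(H-2-w) + k*N*w*(H-2-w)" by (simp add: D_def algebra_simps)
    also have "k*S*(H-2-w) \<le> N* s*(H-2-w)" using a H by (intro mult_right_mono) auto
    finally show ?thesis by simp
  qed
  have c: "P*w \<le> (k+s)*w" using P ts w by (intro mult_right_mono) auto
  have d: "0 \<le> k*w*(w+1)" using k0 w by simp
  have main: "N*(S + P*w) \<le> N*H*(s+k*w) - k*D*(H-2-w)"
  proof -
    have "S + P*w \<le> s*(2+w) + k*w*(2+w)" using c d S ts by (simp add: algebra_simps)
    hence "N*(S + P*w) \<le> N*(s*(2+w) + k*w*(2+w))" using N by (intro mult_left_mono) auto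
    also have "\<dots> = N*H*(s+k*w) - (N* s*(H-2-w) + k*N*w*(H-2-w))" by (simp add: algebra_simps)
    also have "\<dots> \<le> N*H*(s+k*w) - k*D*(H-2-w)" using b by simp
    finally show ?thesis .
  qed
  have "N*((S + P*w) + H*(k*D - (s + k*w))) \<le> N*(k*hN*D)"
  proof -
    have "N*(k*hN*D) = k*D*(N*hN)" by (simp add: algebra_simps)
    also have "\<dots> = k*D*((N-1)*H + 2 + w)" using hN by simp
    finally have "N*(k*hN*D) = k*D*((N-1)*H + 2 + w)" .
    thus ?thesis using main by (simp add: algebra_simps)
  qed
  hence "(S + P*w) + H*(k*D - (s + k*w)) \<le> k*hN*D" using N by simp
  thus ?thesis by (simp add: D_def)
qed

lemma comb_facts:
  assumes g: "ginv Vc Ec" and cov: "\<forall>e\<in>Ec. e \<inter> C \<noteq> {}"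
  shows "(\<Sum>v\<in>Vc - C \<inter> Vc. deg Ec v) \<le> (\<Sum>v\<in>C \<inter> Vc. deg Ec v)"
    and "card {v\<in>Vc. deg Ec v > 0} \<le> card (C \<inter> Vc) + (\<Sum>v\<in>Vc - C \<inter> Vc. deg Ec v)"
proof -
  have fin: "finite Vc" using g ginv_def by auto
  have finE: "finite Ec" using ginv_finite_E[OF g] .
  let ?K = "C \<inter> Vc"
  have "(\<Sum>v\<in>Vc - ?K. deg Ec v) = (\<Sum>e\<in>Ec. card ((Vc - ?K) \<inter> e))"
    using double_count[OF finE] fin by simp
  also have "\<dots> \<le> (\<Sum>e\<in>Ec. card (?K \<inter> e))"
  proof (rule sum_mono)
    fix e assume e: "e \<in> Ec"
    have sub: "e \<subseteq> Vc" and c2: "card e = 2" using g e unfolding ginv_def by auto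
    have fe: "finite e" using c2 by (metis card.infinite zero_neq_numeral)
    have ne: "?K \<inter> e \<noteq> {}" using cov e sub by auto
    have "card (?K \<inter> e) \<ge> 1" using ne fe by (simp add: Suc_le_eq card_gt_0_iff)
    moreover have "card ((Vc - ?K) \<inter> e) + card (?K \<inter> e) = card e"
    proof -
      have "(Vc - ?K) \<inter> e = e - ?K" using sub by auto
      moreover have "?K \<inter> e = e \<inter> ?K" by auto
      ultimately show ?thesis using card_Int_Diff[OF fe, of ?K] by simp
    qed
    ultimately show "card ((Vc - ?K) \<inter> e) \<le> card (?K \<inter> e)" using c2 by linarith
  qed
  also have "\<dots> = (\<Sum>v\<in>?K. deg Ec v)"
    using double_count[OF finE, of ?K] fin by simp
  finally show "(\<Sum>v\<in>Vc - ?K. deg Ec v) \<le> (\<Sum>v\<in>?K. deg Ec v)" .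
  have "{v\<in>Vc. deg Ec v > 0} \<subseteq> ?K \<union> {v\<in>Vc - ?K. deg Ec v > 0}" by auto
  hence "card {v\<in>Vc. deg Ec v > 0} \<le> card (?K \<union> {v\<in>Vc - ?K. deg Ec v > 0})"
    using fin by (intro card_mono) auto
  also have "\<dots> \<le> card ?K + card {v\<in>Vc - ?K. deg Ec v > 0}" by (rule card_Un_le)
  also have "card {v\<in>Vc - ?K. deg Ec v > 0} \<le> (\<Sum>v\<in>{v\<in>Vc - ?K. deg Ec v > 0}. deg Ec v)"
    using card_eq_sum[of "{v\<in>Vc - ?K. deg Ec v > 0}"] sum_mono[of "{v\<in>Vc - ?K. deg Ec v > 0}" "\<lambda>_. 1::nat" "deg Ec"]
    by (simp add: Suc_le_eq)
  also have "\<dots> \<le> (\<Sum>v\<in>Vc - ?K. deg Ec v)"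
    using fin by (intro sum_mono2) auto
  finally show "card {v\<in>Vc. deg Ec v > 0} \<le> card ?K + (\<Sum>v\<in>Vc - ?K. deg Ec v)" by simp
qed


definition hh :: "real \<Rightarrow> nat \<Rightarrow> nat \<Rightarrow> real" where
  "hh eps n N = 2 + (\<Sum>j=1..N. wt eps n (n - j + 1)) / real N"

lemma wt_nonneg: "eps > 0 \<Longrightarrow> wt eps n i \<ge> 0"
  unfolding wt_def by simp

lemma hh_ge2: "eps > 0 \<Longrightarrow> hh eps n N \<ge> 2"
  unfolding hh_def by (simp add: sum_nonneg wt_nonneg)

lemma hh_rec:
  assumes "N \<ge> 1"
  shows "real N * hh eps n N = real (N - 1) * hh eps n (N - 1) + 2 + wt eps n (n - N + 1)"
proof -
  have sN: "(\<Sum>j=1..N. wt eps n (n - j + 1)) = (\<Sum>j=1..N-1. wt eps n (n - j + 1)) + wt eps n (n - N + 1)"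
  proof -
    obtain M where M: "N = Suc M" using assms by (cases N) auto
    show ?thesis unfolding M by (simp add: sum.cl_ivl_Suc)
  qed
  have a: "real N * hh eps n N = 2 * real N + (\<Sum>j=1..N. wt eps n (n - j + 1))"
    unfolding hh_def using assms by (simp add: algebra_simps)
  have b: "real (N - 1) * hh eps n (N - 1) = 2 * real (N - 1) + (\<Sum>j=1..N-1. wt eps n (n - j + 1))"
  proof (cases "N = 1")
    case True thus ?thesis by simp
  next
    case False
    hence nz: "real (N - 1) \<noteq> 0" using assms by simp
    show ?thesis unfolding hh_def using nz by (simp only: distrib_left) simp
  qed
  show ?thesis using a b sN assms by (simp add: of_nat_diff)
qed

lemma wt_mono:
  assumes "eps > 0" "1 \<le> j" "j \<le> N" "N \<le> n"
  shows "wt eps n (n - N + 1) \<le> wt eps n (n - j + 1)"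
proof -
  have "real n / real N \<le> real n / real j" using assms by (intro divide_left_mono) auto
  hence sq: "sqrt (real n / real N) \<le> sqrt (real n / real j)" by simp
  have "4 / eps * sqrt (real n / real N) \<le> 4 / eps * sqrt (real n / real j)"
    using sq assms by (intro mult_left_mono) auto
  thus ?thesis using assms wt_eq[of N n eps] wt_eq[of j n eps] by simp
qed

lemma hh_big:
  assumes eps: "eps > 0" and N: "2 \<le> N" "N \<le> n"
  shows "hh eps n (N - 1) \<ge> 2 + wt eps n (n - N + 1)"
proof -
  have "(\<Sum>j=1..N-1. wt eps n (n - N + 1)) \<le> (\<Sum>j=1..N-1. wt eps n (n - j + 1))"
    by (rule sum_mono) (use wt_mono[OF eps] N in auto)
  hence "real (N - 1) * wt eps n (n - N + 1) \<le> (\<Sum>j=1..N-1. wt eps n (n - j + 1))" by simp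
  moreover have "real (N - 1) > 0" using N by simp
  ultimately have "wt eps n (n - N + 1) \<le> (\<Sum>j=1..N-1. wt eps n (n - j + 1)) / real (N - 1)"
    by (simp add: field_simps)
  thus ?thesis unfolding hh_def by simp
qed


lemma main_bound:
  "ginv Vc Ec \<Longrightarrow> card Vc \<le> n \<Longrightarrow> eps > 0 \<Longrightarrow> \<forall>e\<in>Ec. e \<inter> C \<noteq> {} \<Longrightarrow>
   Fexp eps n Vc Ec \<le> real (card (C \<inter> Vc)) * hh eps n (card Vc)"
proof (induction "card Vc" arbitrary: Vc Ec)
  case 0
  have "Fexp eps n Vc Ec \<le> 0" using Fexp_le_card[OF 0(2,3,4)] 0(1) by simp
  moreover have "hh eps n (card Vc) \<ge> 2" by (rule hh_ge2[OF 0(4)])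
  hence "0 \<le> real (card (C \<inter> Vc)) * hh eps n (card Vc)" by simp
  ultimately show ?case by linarith
next
  case (Suc N')
  note g = Suc.prems(1) and le = Suc.prems(2) and eps = Suc.prems(3) and cov = Suc.prems(4)
  define N where "N = card Vc"
  define K where "K = C \<inter> Vc"
  define k where "k = card K"
  have fin: "finite Vc" using g ginv_def by auto
  have finE: "finite Ec" using ginv_finite_E[OF g] .
  have NS: "N = Suc N'" using Suc.hyps(2) N_def by simp
  have ne: "Vc \<noteq> {}" using NS N_def by auto
  have KV: "K \<subseteq> Vc" unfolding K_def by auto
  have finK: "finite K" using KV fin finite_subset by auto
  show ?case
  proof (cases "N \<le> 2 * k")
    case True
    have "Fexp eps n Vc Ec \<le> real N" using Fexp_le_card[OF g le eps] N_def by simp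
    also have "\<dots> \<le> real k * 2" using True by simp
    also have "\<dots> \<le> real k * hh eps n N" using hh_ge2[OF eps] by (intro mult_left_mono) auto
    finally show ?thesis unfolding N_def k_def K_def .
  next
    case False
    hence kN: "2 * k < N" by simp
    define w where "w = wt eps n (n - N + 1)"
    define H where "H = hh eps n N'"
    define d where "d = (\<lambda>v. real (deg Ec v))"
    define c where "c = (\<lambda>v. if deg Ec v > 0 then 1 else (0::real))"
    define kv where "kv = (\<lambda>v. real k - (if v \<in> C then 1 else 0))"
    define D where "D = (\<Sum>u\<in>Vc. d u + w)"
    have w0: "w > 0" unfolding w_def using wt_pos[OF eps, of N n] NS le N_def by simp
    have pm: "\<And>v. v \<in> Vc \<Longrightarrow> pmf (pick w Vc Ec) v = (d v + w) / D"
      using pick_pmf(1)[OF fin ne w0] unfolding d_def D_def by simp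
    have Dpos: "D > 0" unfolding D_def d_def using fin ne w0
      by (intro sum_pos) (auto intro: add_nonneg_pos)
    have IH: "Fexp eps n (Vc - {v}) {e\<in>Ec. v \<notin> e} \<le> kv v * H" if v: "v \<in> Vc" for v
    proof -
      have cv: "N' = card (Vc - {v})" using v fin NS N_def by simp
      have "Fexp eps n (Vc - {v}) {e\<in>Ec. v \<notin> e} \<le> real (card (C \<inter> (Vc - {v}))) * hh eps n (card (Vc - {v}))"
      proof (rule Suc.hyps(1)[OF cv])
        show "card (Vc - {v}) \<le> n" using cv NS N_def le by simp
      qed (use ginv_step[OF g] cov eps in auto)
      moreover have "C \<inter> (Vc - {v}) = K - {v}" unfolding K_def by auto
      moreover have "real (card (K - {v})) = kv v"
      proof (cases "v \<in> C")
        case True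
        hence vK: "v \<in> K" using v K_def by simp
        hence "card K \<ge> 1" using finK by (metis One_nat_def Suc_leI card_gt_0_iff empty_iff)
        thus ?thesis using vK True finK by (simp add: kv_def k_def of_nat_diff)
      next
        case False
        hence "K - {v} = K" using K_def by auto
        thus ?thesis using False by (simp add: kv_def k_def)
      qed
      ultimately show ?thesis using cv H_def by simp
    qed
    have "Fexp eps n Vc Ec = (\<Sum>v\<in>Vc. pmf (pick w Vc Ec) v * (c v + Fexp eps n (Vc - {v}) {e\<in>Ec. v \<notin> e}))"
      using Fexp_step[OF g ne le eps] unfolding w_def c_def N_def by simp
    also have "\<dots> \<le> (\<Sum>v\<in>Vc. ((d v + w) / D) * (c v + kv v * H))"
    proof (rule sum_mono)
      fix v assume v: "v \<in> Vc"
      have "0 \<le> (d v + w) / D" using Dpos w0 unfolding d_def by simp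
      thus "pmf (pick w Vc Ec) v * (c v + Fexp eps n (Vc - {v}) {e\<in>Ec. v \<notin> e}) \<le> ((d v + w) / D) * (c v + kv v * H)"
        unfolding pm[OF v] using IH[OF v] by (intro mult_left_mono) auto
    qed
    also have "\<dots> = (\<Sum>v\<in>Vc. ((d v + w) * c v + H * ((d v + w) * kv v)) / D)"
      by (rule sum.cong) (use Dpos in \<open>simp_all add: field_simps\<close>)
    also have "\<dots> = (\<Sum>v\<in>Vc. (d v + w) * c v + H * ((d v + w) * kv v)) / D"
      by (simp add: sum_divide_distrib)
    also have "\<dots> = ((\<Sum>v\<in>Vc. (d v + w) * c v) + H * (\<Sum>v\<in>Vc. (d v + w) * kv v)) / D"
      by (simp add: sum.distrib sum_distrib_left)
    also have "\<dots> \<le> real k * hh eps n N"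
    proof -
      define S where "S = (\<Sum>v\<in>Vc. d v)"
      define sK where "sK = (\<Sum>v\<in>K. d v)"
      define t where "t = (\<Sum>v\<in>Vc - K. d v)"
      define P where "P = real (card {v\<in>Vc. deg Ec v > 0})"
      have SD: "D = S + real N * w" unfolding D_def S_def N_def by (simp add: sum.distrib)
      have F1: "(\<Sum>v\<in>Vc. (d v + w) * c v) = S + w * P"
      proof -
        have "(\<Sum>v\<in>Vc. (d v + w) * c v) = (\<Sum>v\<in>Vc. d v + w * c v)"
          by (rule sum.cong) (auto simp: c_def d_def)
        also have "\<dots> = S + w * (\<Sum>v\<in>Vc. c v)" unfolding S_def by (simp add: sum.distrib sum_distrib_left)
        also have "(\<Sum>v\<in>Vc. c v) = P" unfolding c_def P_def using fin
          by (simp add: sum.If_cases Int_def)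
        finally show ?thesis .
      qed
      have F2: "(\<Sum>v\<in>Vc. (d v + w) * kv v) = real k * (S + real N * w) - (sK + real k * w)"
      proof -
        have "(\<Sum>v\<in>Vc. (d v + w) * kv v) = real k * (\<Sum>v\<in>Vc. d v + w) - (\<Sum>v\<in>Vc. if v \<in> C then d v + w else 0)"
        proof -
          have "(\<Sum>v\<in>Vc. (d v + w) * kv v) = (\<Sum>v\<in>Vc. real k * (d v + w) - (if v \<in> C then d v + w else 0))"
            by (rule sum.cong) (simp_all add: kv_def algebra_simps)
          thus ?thesis by (simp only: sum_subtractf sum_distrib_left)
        qed
        also have "(\<Sum>v\<in>Vc. if v \<in> C then d v + w else 0) = (\<Sum>v\<in>K. d v + w)"
          unfolding K_def using fin by (simp add: sum.If_cases Int_def conj_commute)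
        also have "\<dots> = sK + real k * w" unfolding sK_def k_def by (simp add: sum.distrib)
        also have "(\<Sum>v\<in>Vc. d v + w) = S + real N * w" unfolding S_def N_def by (simp add: sum.distrib)
        finally show ?thesis .
      qed
      have St: "S = sK + t" unfolding S_def sK_def t_def using sum.subset_diff[OF KV fin, of d] by simp
      have t0: "0 \<le> t" unfolding t_def d_def by (simp add: sum_nonneg)
      have cf1: "t \<le> sK" using comb_facts(1)[OF g cov] unfolding t_def sK_def d_def K_def
        by (metis of_nat_le_iff of_nat_sum)
      have cf2: "P \<le> real k + t" using comb_facts(2)[OF g cov] unfolding t_def P_def k_def d_def K_def
        by (metis of_nat_add of_nat_le_iff of_nat_sum)
      have P0: "0 \<le> P" unfolding P_def by simp
      have goal: "(S + w * P) + H * (real k * (S + real N * w) - (sK + real k * w)) \<le> real k * hh eps n N * (S + real N * w)"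
      proof (cases "k = 0")
        case True
        hence "K = {}" using finK k_def by simp
        hence "sK = 0" unfolding sK_def by simp
        hence "t = 0" "S = 0" "P = 0" using t0 cf1 St cf2 P0 True by auto
        thus ?thesis using \<open>sK = 0\<close> True by simp
      next
        case False
        have N2: "2 \<le> N" using False kN by simp
        have rec: "real N * hh eps n N = (real N - 1) * H + 2 + w"
          using hh_rec[of N eps n] N2 NS unfolding H_def w_def by (simp add: of_nat_diff)
        have Hb: "H \<ge> 2 + w" using hh_big[OF eps N2] le NS unfolding H_def w_def N_def by simp
        show ?thesis
          using key_ineq[OF rec Hb St t0 cf1 P0 cf2] kN w0 N2 by (simp add: mult.commute)
      qed
      show ?thesis using goal F1 F2 Dpos SD by (simp add: divide_le_eq mult.commute)
    qed
    finally show ?thesis unfolding N_def k_def K_def .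
  qed
qed


lemma sum_inv_sqrt: "(\<Sum>j=1..m. 1 / sqrt (real j)) \<le> 2 * sqrt (real m)"
proof (induction m)
  case 0 thus ?case by simp
next
  case (Suc m)
  define a where "a = sqrt (real m)"
  define b where "b = sqrt (real (Suc m))"
  have b0: "b > 0" unfolding b_def by simp
  have ab: "a \<le> b" unfolding a_def b_def by simp
  have a0: "a \<ge> 0" unfolding a_def by simp
  have sq: "b * b - a * a = 1" unfolding a_def b_def by simp
  have "2 * b * (b - a) - 1 = (b - a) * (b - a)" using sq by (simp add: algebra_simps)
  hence h: "2 * b * (b - a) \<ge> 1" by (smt (verit) mult_nonneg_nonneg ab)
  have e: "2 * (b - a) * b = 2 * b * (b - a)" by (simp add: algebra_simps)
  have h2: "1 \<le> 2 * (b - a) * b" using h e by linarith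
  have step: "1 / b \<le> 2 * (b - a)" by (subst pos_divide_le_eq[OF b0]) (rule h2)
  have "(\<Sum>j=1..Suc m. 1 / sqrt (real j)) = (\<Sum>j=1..m. 1 / sqrt (real j)) + 1 / b"
    by (simp add: sum.cl_ivl_Suc b_def)
  also have "\<dots> \<le> 2 * a + 1 / b" using Suc.IH a_def by simp
  also have "\<dots> \<le> 2 * b" using step by simp
  finally show ?case unfolding b_def .
qed

lemma sum_wt_rev:
  "(\<Sum>i=1..n. wt eps n i) = (\<Sum>j=1..n. wt eps n (n - j + 1))"
proof -
  have "(\<Sum>i=1..n. wt eps n i) = (\<Sum>j=1..n. wt eps n (n + 1 - j))"
    by (rule sum.atLeastAtMost_rev)
  also have "\<dots> = (\<Sum>j=1..n. wt eps n (n - j + 1))"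
    by (rule sum.cong) (auto simp: Suc_diff_le)
  finally show ?thesis .
qed

lemma sum_wt_bound:
  assumes "eps > 0"
  shows "(\<Sum>i=1..n. wt eps n i) \<le> 8 / eps * real n"
proof -
  have "(\<Sum>i=1..n. wt eps n i) = (\<Sum>j=1..n. 4 / eps * sqrt (real n) * (1 / sqrt (real j)))"
    unfolding sum_wt_rev
  proof (rule sum.cong)
    fix j assume j: "j \<in> {1..n}"
    have "wt eps n (n - j + 1) = 4 / eps * sqrt (real n / real j)" by (rule wt_eq) (use j in auto)
    thus "wt eps n (n - j + 1) = 4 / eps * sqrt (real n) * (1 / sqrt (real j))"
      by (simp add: real_sqrt_divide)
  qed simp
  also have "\<dots> = 4 / eps * sqrt (real n) * (\<Sum>j=1..n. 1 / sqrt (real j))"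
    by (simp add: sum_distrib_left)
  also have "\<dots> \<le> 4 / eps * sqrt (real n) * (2 * sqrt (real n))"
    using assms sum_inv_sqrt[of n] by (intro mult_left_mono) auto
  also have "\<dots> = 8 / eps * real n" by simp
  finally show ?thesis .
qed

theorem mainTheorem7:
  fixes V :: "'a set" and E :: "'a set set" and eps :: real
  assumes "simple_graph V E" and "eps > 0"
  defines "n \<equiv> card V"
  shows "ALG_expect eps V E
           \<le> (2 + 2 * (1 / real n) * (\<Sum>i=1..n. wt eps n i)) * real (OPT V E)
       \<and> (2 + 2 * (1 / real n) * (\<Sum>i=1..n. wt eps n i)) * real (OPT V E)
           \<le> (2 + 16 / eps) * real (OPT V E)"
proof
  have finV: "finite V" and edges: "\<forall>e\<in>E. e \<subseteq> V \<and> card e = 2"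
    using assms(1) unfolding simple_graph_def by auto
  have g: "ginv V E" unfolding ginv_def using finV edges by auto
  have "\<forall>e\<in>E. e \<noteq> {}" using edges by (metis card.empty zero_neq_numeral)
  hence cV: "is_vertex_cover V E V" unfolding is_vertex_cover_def using edges
    by (metis Int_absorb2 order_refl)
  have finS: "finite {card C | C. is_vertex_cover V E C}"
  proof (rule finite_subset)
    show "{card C | C. is_vertex_cover V E C} \<subseteq> card ` Pow V" unfolding is_vertex_cover_def by auto
    show "finite (card ` Pow V)" using finV by simp
  qed
  have "OPT V E \<in> {card C | C. is_vertex_cover V E C}"
    unfolding OPT_def using finS cV by (intro Min_in) auto
  then obtain C where C: "is_vertex_cover V E C" "card C = OPT V E" by auto
  have CV: "C \<inter> V = C" using C(1) unfolding is_vertex_cover_def by auto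
  have cov: "\<forall>e\<in>E. e \<inter> C \<noteq> {}" using C(1) unfolding is_vertex_cover_def by auto
  define \<Sigma> where "\<Sigma> = (\<Sum>i=1..n. wt eps n i)"
  have \<Sigma>0: "\<Sigma> \<ge> 0" unfolding \<Sigma>_def using wt_nonneg[OF assms(2)] by (simp add: sum_nonneg)
  have "ALG_expect eps V E = Fexp eps n V E"
    unfolding ALG_expect_def Fexp_def alg_perm_def n_def by simp
  also have "\<dots> \<le> real (card (C \<inter> V)) * hh eps n (card V)"
    using main_bound[OF g _ assms(2) cov] n_def by simp
  also have "hh eps n (card V) = 2 + (1 / real n) * \<Sigma>"
    unfolding hh_def \<Sigma>_def n_def[symmetric] sum_wt_rev by simp
  also have "real (card (C \<inter> V)) * (2 + (1 / real n) * \<Sigma>) \<le> (2 + 2 * (1 / real n) * \<Sigma>) * real (OPT V E)"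
  proof -
    have x0: "0 \<le> (1 / real n) * \<Sigma>" using \<Sigma>0 by simp
    have "real (card (C \<inter> V)) * (2 + (1 / real n) * \<Sigma>) = (2 + (1 / real n) * \<Sigma>) * real (OPT V E)"
      using CV C(2) by simp
    also have "\<dots> \<le> (2 + 2 * (1 / real n) * \<Sigma>) * real (OPT V E)"
      using x0 by (intro mult_right_mono) auto
    finally show ?thesis .
  qed
  finally show "ALG_expect eps V E \<le> (2 + 2 * (1 / real n) * (\<Sum>i=1..n. wt eps n i)) * real (OPT V E)"
    unfolding \<Sigma>_def .
  have "2 * (1 / real n) * (\<Sum>i=1..n. wt eps n i) \<le> 16 / eps"
  proof (cases "n = 0")
    case True thus ?thesis using assms(2) by simp
  next
    case False
    have "2 * (1 / real n) * (\<Sum>i=1..n. wt eps n i) \<le> 2 * (1 / real n) * (8 / eps * real n)"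
      using sum_wt_bound[OF assms(2), of n] by (intro mult_left_mono) auto
    also have "\<dots> = 16 / eps" using False by simp
    finally show ?thesis .
  qed
  thus "(2 + 2 * (1 / real n) * (\<Sum>i=1..n. wt eps n i)) * real (OPT V E) \<le> (2 + 16 / eps) * real (OPT V E)"
    by (intro mult_right_mono) auto
qed


end
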